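(* The monotone-regression risk at zero satisfies $r(1)=1$, $r(N)\le20(\log N)^2$ for all $N\ge10$, and $r(N)<2N[\log N+1]$ for all $N\ge1$.
   Context: $\mathcal M_N=\{x\in\mathbb R^N:x_{t+1}\ge x_t\ \text{for all }t=1,\dots,N-1\}$; $\eta^{mono}(y)=\arg\min_{x\in\mathcal M_N}\|y-x\|_2^2$; $r(N)=\mathbb E\|\eta^{mono}(\mathbf Z)\|_2^2$ with $\mathbf Z\sim\mathsf N(0,I_{N\times N})$; $\log$ is the natural logarithm. *)

theory Defs
  imports "HOL-Probability.Probability"
begin

text \<open>Vectors in R^N are represented as functions nat => real on the index set {0..<N}
  (coordinates t = 0..N-1 correspond to the paper's 1..N).\<close>

definition mono_cone :: "nat \<Rightarrow> (nat \<Rightarrow> real) set" where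
  "mono_cone N = {x. (\<forall>t. Suc t < N \<longrightarrow> x (Suc t) \<ge> x t) \<and> (\<forall>t\<ge>N. x t = 0)}"

definition sqdist :: "nat \<Rightarrow> (nat \<Rightarrow> real) \<Rightarrow> (nat \<Rightarrow> real) \<Rightarrow> real" where
  "sqdist N y x = (\<Sum>i<N. (y i - x i)^2)"

definition eta_mono :: "nat \<Rightarrow> (nat \<Rightarrow> real) \<Rightarrow> (nat \<Rightarrow> real)" where
  "eta_mono N y = (THE x. x \<in> mono_cone N \<and> (\<forall>z\<in>mono_cone N. sqdist N y x \<le> sqdist N y z))"

definition gauss :: "nat \<Rightarrow> (nat \<Rightarrow> real) measure" where
  "gauss N = PiM {..<N} (\<lambda>_. density lborel std_normal_density)"

definition risk :: "nat \<Rightarrow> real" where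
  "risk N = (\<integral>z. (\<Sum>i<N. (eta_mono N z i)^2) \<partial>gauss N)"

end

theory Submission
  imports Defs
begin


lemma gauss_prob: "prob_space (gauss N)"
  unfolding gauss_def by (intro prob_space_PiM prob_space_normal_density) auto

lemma gauss_comp: assumes "i < N"
  shows "distributed (gauss N) lborel (\<lambda>z. z i) std_normal_density"
  unfolding distributed_def
proof (intro conjI)
  have "distr (gauss N) lborel (\<lambda>z. z i) = distr (gauss N) (density lborel std_normal_density) (\<lambda>z. z i)"
    by (rule distr_cong) auto
  also have "\<dots> = density lborel std_normal_density"
    unfolding gauss_def using assms by (intro distr_PiM_component prob_space_normal_density) auto
  finally show "distr (gauss N) lborel (\<lambda>z. z i) = density lborel std_normal_density" .
  show "(\<lambda>x. ennreal (std_normal_density x)) \<in> borel_measurable lborel" by simp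
  show "(\<lambda>z. z i) \<in> measurable (gauss N) lborel" unfolding gauss_def using assms
    by (simp add: measurable_component_singleton cong: measurable_cong_sets)
qed

lemma gauss_indep: "prob_space.indep_vars (gauss N) (\<lambda>_. borel) (\<lambda>i z. z i) {..<N}"
proof (cases "N = 0")
  case True then show ?thesis
    by (simp add: prob_space.indep_vars_def gauss_prob prob_space.indep_sets_def)
next
  case False
  interpret prob_space "gauss N" by (rule gauss_prob)
  have rv: "random_variable borel (\<lambda>z. z i)" if "i < N" for i 
    using gauss_comp[OF that] unfolding distributed_def by simp
  have rv': "random_variable borel (\<lambda>z. z i)" for i
  proof (cases "i < N")
    case True then show ?thesis using rv by simp
  next
    case False
    show ?thesis
      by (subst measurable_cong[where g="\<lambda>z. undefined"]) (use False in \<open>auto simp: gauss_def space_PiM PiE_def extensional_def\<close>)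
  qed
  have d: "distr (gauss N) borel (\<lambda>z. z i) = density lborel std_normal_density" if "i < N" for i
  proof -
    have "distr (gauss N) borel (\<lambda>z. z i) = distr (gauss N) lborel (\<lambda>z. z i)"
      by (rule distr_cong) auto
    also have "\<dots> = density lborel std_normal_density"
      using gauss_comp[OF that] unfolding distributed_def by simp
    finally show ?thesis .
  qed
  show ?thesis
  proof (subst indep_vars_iff_distr_eq_PiM)
    show "{..<N} \<noteq> {}" using False by auto
    show "random_variable borel (\<lambda>z. z i)" for i by (rule rv')
    have "distr (gauss N) (\<Pi>\<^sub>M i\<in>{..<N}. borel) (\<lambda>x. \<lambda>i\<in>{..<N}. x i) = distr (gauss N) (gauss N) (\<lambda>x. x)"
      by (rule distr_cong) (auto simp: gauss_def space_PiM PiE_def extensional_def intro!: sets_PiM_cong)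
    also have "\<dots> = gauss N" by simp
    also have "\<dots> = (\<Pi>\<^sub>M i\<in>{..<N}. distr (gauss N) borel (\<lambda>z. z i))"
      unfolding gauss_def[of N] by (rule PiM_cong) (auto simp: d[unfolded gauss_def])
    finally show "distr (gauss N) (\<Pi>\<^sub>M i\<in>{..<N}. borel) (\<lambda>x. \<lambda>i\<in>{..<N}. x i) = (\<Pi>\<^sub>M i\<in>{..<N}. distr (gauss N) borel (\<lambda>z. z i))" .
  qed
qed

lemma gauss_sum_dist: assumes "J \<subseteq> {..<N}" "J \<noteq> {}"
  shows "distributed (gauss N) lborel (\<lambda>z. \<Sum>i\<in>J. z i) (normal_density 0 (sqrt (card J)))"
proof -
  interpret prob_space "gauss N" by (rule gauss_prob)
  have fin: "finite J" using assms(1) finite_subset by blast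
  have "distributed (gauss N) lborel (\<lambda>x. \<Sum>i\<in>J. x i) (normal_density (\<Sum>i\<in>J. 0) (sqrt (\<Sum>i\<in>J. 1\<^sup>2)))"
    using assms fin
    by (intro sum_indep_normal[where X="\<lambda>i z. z i"] indep_vars_subset[OF gauss_indep] gauss_comp) auto
  then show ?thesis by simp
qed

definition mom :: "nat \<Rightarrow> real" where "mom k = fact (2*k) / (2^k * fact k)"

lemma gauss_sum_moment: assumes "J \<subseteq> {..<N}" "J \<noteq> {}"
  shows "integrable (gauss N) (\<lambda>z. (\<Sum>i\<in>J. z i)^(2*k))"
    "(\<integral>z. (\<Sum>i\<in>J. z i)^(2*k) \<partial>gauss N) = mom k * real (card J) ^ k"
proof -
  have fin: "finite J" using assms(1) finite_subset by blast
  then have cpos: "0 < real (card J)" using assms(2) by auto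
  have sp: "0 < sqrt (real (card J))" using cpos by simp
  note D = gauss_sum_dist[OF assms]
  have hb: "has_bochner_integral lborel (\<lambda>x. normal_density 0 (sqrt (card J)) x * (x - 0) ^ (2 * k))
     (fact (2 * k) / ((2 / (sqrt (card J))\<^sup>2)^k * fact k))"
    by (rule normal_moment_even[OF sp])
  show "integrable (gauss N) (\<lambda>z. (\<Sum>i\<in>J. z i)^(2*k))"
    using distributed_integrable[OF D, of "\<lambda>x. x^(2*k)"] hb
    by (auto simp: normal_density_nonneg intro: has_bochner_integral.intros integrable.intros)
  have "(\<integral>z. (\<Sum>i\<in>J. z i)^(2*k) \<partial>gauss N) = (\<integral>x. normal_density 0 (sqrt (card J)) x * x^(2*k) \<partial>lborel)"
    by (rule distributed_integral[OF D, symmetric]) (auto simp: normal_density_nonneg)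
  also have "\<dots> = fact (2 * k) / ((2 / (sqrt (card J))\<^sup>2)^k * fact k)"
    using has_bochner_integral_integral_eq[OF hb] by simp
  also have "\<dots> = mom k * real (card J) ^ k"
    using cpos by (simp add: mom_def power_divide field_simps)
  finally show "(\<integral>z. (\<Sum>i\<in>J. z i)^(2*k) \<partial>gauss N) = mom k * real (card J) ^ k" .
qed



lemma cont_coord[continuous_intros]: "continuous_on S (\<lambda>x::nat\<Rightarrow>real. x i)"
  by (rule continuous_on_subset[OF continuous_on_product_coordinates]) simp

lemma closed_cone: "closed (mono_cone N)"
proof -
  have "mono_cone N = (\<Inter>t\<in>{t. Suc t<N}. {x. x t \<le> x (Suc t)}) \<inter> (\<Inter>t\<in>{t. t\<ge>N}. {x. x t = 0})"
    unfolding mono_cone_def by auto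
  also have "closed \<dots>"
    by (intro closed_Int closed_INT ballI closed_Collect_le closed_Collect_eq cont_coord continuous_on_const)
  finally show ?thesis .
qed

lemma sqdist_cont: "continuous_on S (sqdist N y)"
  unfolding sqdist_def by (intro continuous_on_sum continuous_on_power continuous_on_diff continuous_on_const cont_coord)

lemma exists_min: "\<exists>x\<in>mono_cone N. \<forall>z\<in>mono_cone N. sqdist N y x \<le> sqdist N y z"
proof -
  define Q where "Q = sqdist N y (\<lambda>_. 0)"
  have Q0: "Q \<ge> 0" unfolding Q_def sqdist_def by (intro sum_nonneg) auto
  define R where "R = sqrt Q + (\<Sum>i<N. \<bar>y i\<bar>)"
  define B where "B = PiE UNIV (\<lambda>i. if i < N then {-R..R} else {0::real})"
  have "compact B"
  proof -
    have "compactin (product_topology (\<lambda>i. euclidean) UNIV) B"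
      unfolding B_def compactin_PiE by (simp add: compact_Icc)
    then show ?thesis by (simp add: euclidean_product_topology)
  qed
  then have cK: "compact (B \<inter> mono_cone N)" using closed_cone by (rule compact_Int_closed)
  have z0: "(\<lambda>_. 0) \<in> B \<inter> mono_cone N"
  proof -
    have "0 \<le> R" unfolding R_def using Q0 by (intro add_nonneg_nonneg sum_nonneg) auto
    then show ?thesis unfolding B_def mono_cone_def by (auto simp: PiE_iff)
  qed
  obtain x where x: "x \<in> B \<inter> mono_cone N" and xm: "\<And>z. z \<in> B \<inter> mono_cone N \<Longrightarrow> sqdist N y x \<le> sqdist N y z"
    using continuous_attains_inf[OF cK _ sqdist_cont] z0 by blast
  have xQ: "sqdist N y x \<le> Q" unfolding Q_def using xm[OF z0] .
  show ?thesis
  proof (intro bexI ballI)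
    show "x \<in> mono_cone N" using x by auto
    fix z assume z: "z \<in> mono_cone N"
    show "sqdist N y x \<le> sqdist N y z"
    proof (cases "z \<in> B")
      case True then show ?thesis using xm z by auto
    next
      case False
      then obtain i where i: "i < N" "\<bar>z i\<bar> > R"
      proof -
        from False obtain i where "z i \<notin> (if i < N then {-R..R} else {0})"
          unfolding B_def by (auto simp: PiE_iff)
        moreover have "i \<ge> N \<Longrightarrow> z i = 0" using z unfolding mono_cone_def by auto
        ultimately show ?thesis using that by (cases "i < N") auto
      qed
      have "\<bar>y i\<bar> \<le> (\<Sum>i<N. \<bar>y i\<bar>)" using i(1) by (intro member_le_sum) auto
      then have "sqrt Q \<le> \<bar>y i - z i\<bar>" using i(2) unfolding R_def by linarith
      then have "Q \<le> (y i - z i)^2"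
      proof -
        have "(sqrt Q)^2 \<le> \<bar>y i - z i\<bar>^2" using \<open>sqrt Q \<le> _\<close> using Q0 by (intro power_mono) auto
        then show ?thesis using Q0 by simp
      qed
      also have "\<dots> \<le> sqdist N y z" unfolding sqdist_def
        using i(1) by (intro member_le_sum) auto
      finally show ?thesis using xQ by linarith
    qed
  qed
qed


definition ismin :: "nat \<Rightarrow> (nat \<Rightarrow> real) \<Rightarrow> (nat \<Rightarrow> real) \<Rightarrow> bool" where
  "ismin N y x \<longleftrightarrow> x \<in> mono_cone N \<and> (\<forall>z\<in>mono_cone N. sqdist N y x \<le> sqdist N y z)"

lemma cone_mid: "x \<in> mono_cone N \<Longrightarrow> x' \<in> mono_cone N \<Longrightarrow> (\<lambda>i. (x i + x' i)/2) \<in> mono_cone N"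
  unfolding mono_cone_def by (auto intro!: divide_right_mono add_mono)

lemma sqdist_mid: "sqdist N y (\<lambda>i. (x i + x' i)/2) = (sqdist N y x + sqdist N y x')/2 - (\<Sum>i<N. (x i - x' i)^2)/4"
proof -
  have e: "\<And>i. (y i - (x i + x' i)/2)^2 = (y i - x i)^2/2 + (y i - x' i)^2/2 - (x i - x' i)^2/4"
    by (simp add: power2_eq_square field_simps)
  show ?thesis unfolding sqdist_def e by (simp only: sum_subtractf sum_divide_distrib[symmetric] sum.distrib) simp
qed

lemma ismin_unique: assumes "ismin N y x" "ismin N y x'" shows "x = x'"
proof
  fix j
  have xc: "x \<in> mono_cone N" and x'c: "x' \<in> mono_cone N" using assms unfolding ismin_def by auto
  have m: "(\<lambda>i. (x i + x' i)/2) \<in> mono_cone N" by (rule cone_mid[OF xc x'c])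
  have "sqdist N y x \<le> sqdist N y x'" "sqdist N y x' \<le> sqdist N y x"
    "sqdist N y x \<le> sqdist N y (\<lambda>i. (x i + x' i)/2)" using assms xc x'c m unfolding ismin_def by auto
  then have "(\<Sum>i<N. (x i - x' i)^2)/4 \<le> 0" unfolding sqdist_mid by (simp add: field_simps)
  then have s: "(\<Sum>i<N. (x i - x' i)^2) \<le> 0" by simp
  show "x j = x' j"
  proof (cases "j < N")
    case True
    have "(x j - x' j)^2 \<le> (\<Sum>i<N. (x i - x' i)^2)" using True by (intro member_le_sum) auto
    then have "(x j - x' j)^2 \<le> 0" using s by (rule order_trans)
    then show ?thesis by simp
  next
    case False then show ?thesis using xc x'c unfolding mono_cone_def by auto
  qed
qed

lemma eta_ismin: "ismin N y (eta_mono N y)"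
proof -
  obtain x where x: "ismin N y x" using exists_min[of N y] unfolding ismin_def by blast
  have "eta_mono N y = x" unfolding eta_mono_def
    by (rule the_equality) (use x ismin_unique in \<open>auto simp: ismin_def\<close>)
  then show ?thesis using x by simp
qed

lemma sqdist_pert: assumes "J \<subseteq> {..<N}"
  shows "sqdist N y (\<lambda>i. x i + (if i \<in> J then d else 0)) = sqdist N y x - 2*d*(\<Sum>i\<in>J. y i - x i) + real (card J) * d^2"
proof -
  have "sqdist N y (\<lambda>i. x i + (if i \<in> J then d else 0)) = (\<Sum>i<N. (y i - x i)^2 - (if i \<in> J then 2*d*(y i - x i) - d^2 else 0))"
    unfolding sqdist_def by (intro sum.cong) (auto simp: power2_eq_square algebra_simps)
  also have "\<dots> = sqdist N y x - (\<Sum>i<N. if i \<in> J then 2*d*(y i - x i) - d^2 else 0)"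
    unfolding sqdist_def by (simp add: sum_subtractf)
  also have "(\<Sum>i<N. if i \<in> J then 2*d*(y i - x i) - d^2 else 0) = (\<Sum>i\<in>J. 2*d*(y i - x i) - d^2)"
    using assms by (simp add: sum.If_cases Int_absorb1)
  also have "\<dots> = 2*d*(\<Sum>i\<in>J. y i - x i) - real (card J) * d^2"
    by (simp only: sum_subtractf sum_distrib_left[symmetric] sum_constant)
  finally show ?thesis by simp
qed

lemma block_eq: assumes m: "ismin N y x" and J: "J \<subseteq> {..<N}" and dp: "\<delta> > 0"
  and pc: "\<And>d. \<bar>d\<bar> \<le> \<delta> \<Longrightarrow> (\<lambda>i. x i + (if i \<in> J then d else 0)) \<in> mono_cone N"
  shows "(\<Sum>i\<in>J. y i) = (\<Sum>i\<in>J. x i)"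
proof (rule ccontr)
  define S where "S = (\<Sum>i\<in>J. y i - x i)"
  assume "(\<Sum>i\<in>J. y i) \<noteq> (\<Sum>i\<in>J. x i)"
  then have S0: "S \<noteq> 0" unfolding S_def by (simp add: sum_subtractf)
  then have "J \<noteq> {}" unfolding S_def by auto
  moreover have "finite J" using J finite_subset by blast
  ultimately have L: "real (card J) \<ge> 1" by (simp add: card_gt_0_iff Suc_leI)
  define e where "e = min \<delta> (\<bar>S\<bar> / real (card J))"
  have e0: "e > 0" unfolding e_def using dp S0 L by auto
  have e1: "e * real (card J) \<le> \<bar>S\<bar>" unfolding e_def using L
    by (metis min.cobounded2 less_le_trans zero_less_one mult.commute pos_le_divide_eq)
  define d where "d = sgn S * e"
  have "\<bar>d\<bar> = e" unfolding d_def using S0 e0 by (simp add: abs_mult)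
  then have dd: "\<bar>d\<bar> \<le> \<delta>" unfolding e_def by simp
  have "sqdist N y x \<le> sqdist N y (\<lambda>i. x i + (if i \<in> J then d else 0))"
    using m pc[OF dd] unfolding ismin_def by auto
  also have "\<dots> = sqdist N y x - 2*d*S + real (card J) * d^2"
    unfolding S_def by (rule sqdist_pert[OF J])
  finally have "2*d*S \<le> real (card J) * d^2" by simp
  moreover have "d*S = e * \<bar>S\<bar>" "d^2 = e^2" unfolding d_def using S0
    by (auto simp: power2_eq_square abs_sgn mult.commute sgn_mult_self_eq)
  ultimately have "2 * e * \<bar>S\<bar> \<le> real (card J) * e^2" by simp
  also have "\<dots> = e * (e * real (card J))" by (simp add: power2_eq_square)
  also have "\<dots> \<le> e * \<bar>S\<bar>" using e0 e1 by (intro mult_left_mono) auto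
  finally show False using e0 S0 by (simp add: mult_pos_pos)
qed


lemma cone_mono: assumes "x \<in> mono_cone N" "i \<le> j" "j < N" shows "x i \<le> x j"
  using assms(2,3)
proof (induction j)
  case 0 then show ?case by simp
next
  case (Suc j)
  show ?case
  proof (cases "i = Suc j")
    case True then show ?thesis by simp
  next
    case False
    then have "x i \<le> x j" using Suc by auto
    also have "x j \<le> x (Suc j)" using assms(1) Suc.prems unfolding mono_cone_def by auto
    finally show ?thesis .
  qed
qed

lemma upper_avg: assumes m: "ismin N y x" and t: "t < N"
  shows "\<exists>s\<le>t. x t \<le> (\<Sum>i\<in>{s..<N}. y i) / real (N - s)"
proof -
  have xc: "x \<in> mono_cone N" using m unfolding ismin_def by auto
  define s where "s = (LEAST s. x t \<le> x s)"
  have st: "s \<le> t" unfolding s_def by (rule Least_le) simp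
  have xs: "x t \<le> x s" unfolding s_def by (rule LeastI[of _ t]) simp
  have below: "x (s - 1) < x s" if "s > 0"
  proof -
    have "\<not> x t \<le> x (s - 1)" unfolding s_def
      by (rule not_less_Least) (use that in \<open>auto simp: s_def[symmetric]\<close>)
    then show ?thesis using xs by simp
  qed
  define \<delta> where "\<delta> = (if s = 0 then 1 else x s - x (s - 1))"
  have dp: "\<delta> > 0" unfolding \<delta>_def using below by auto
  have J: "{s..<N} \<subseteq> {..<N}" by auto
  have eq: "(\<Sum>i\<in>{s..<N}. y i) = (\<Sum>i\<in>{s..<N}. x i)"
  proof (rule block_eq[OF m J dp])
    fix d :: real assume d: "\<bar>d\<bar> \<le> \<delta>"
    show "(\<lambda>i. x i + (if i \<in> {s..<N} then d else 0)) \<in> mono_cone N"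
      unfolding mono_cone_def
    proof (intro CollectI conjI allI impI)
      fix k assume k: "Suc k < N"
      have xk: "x k \<le> x (Suc k)" using xc k unfolding mono_cone_def by auto
      show "x k + (if k \<in> {s..<N} then d else 0) \<le> x (Suc k) + (if Suc k \<in> {s..<N} then d else 0)"
      proof (cases "Suc k = s")
        case True
        then have "s > 0" "k = s - 1" by auto
        then show ?thesis using True d k unfolding \<delta>_def by auto
      next
        case False then show ?thesis using xk k by auto
      qed
    next
      fix k assume "N \<le> k" then show "x k + (if k \<in> {s..<N} then d else 0) = 0"
        using xc unfolding mono_cone_def by auto
    qed
  qed
  have "(\<Sum>i\<in>{s..<N}. x t) \<le> (\<Sum>i\<in>{s..<N}. x i)"
  proof (intro sum_mono)
    fix i assume "i \<in> {s..<N}"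
    then have "x s \<le> x i" using cone_mono[OF xc] by auto
    then show "x t \<le> x i" using xs by linarith
  qed
  then have "real (N - s) * x t \<le> (\<Sum>i\<in>{s..<N}. y i)" using eq by simp
  moreover have "N - s > 0" using st t by auto
  ultimately have "x t \<le> (\<Sum>i\<in>{s..<N}. y i) / real (N - s)" by (simp add: field_simps)
  then show ?thesis using st by blast
qed

lemma lower_avg: assumes m: "ismin N y x" and t: "t < N"
  shows "\<exists>u. t \<le> u \<and> u < N \<and> (\<Sum>i\<in>{..u}. y i) / real (Suc u) \<le> x t"
proof -
  have xc: "x \<in> mono_cone N" using m unfolding ismin_def by auto
  define u where "u = (GREATEST u. u < N \<and> x u \<le> x t)"
  have bnd: "\<forall>v. v < N \<and> x v \<le> x t \<longrightarrow> v \<le> N" by auto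
  have uP: "u < N \<and> x u \<le> x t" unfolding u_def by (rule GreatestI_nat[of _ t N]) (use t in auto)
  have tu: "t \<le> u" unfolding u_def by (rule Greatest_le_nat[of _ t N]) (use t in auto)
  have above: "x u < x (Suc u)" if "Suc u < N"
  proof -
    have "\<not> (Suc u < N \<and> x (Suc u) \<le> x t)"
    proof
      assume "Suc u < N \<and> x (Suc u) \<le> x t"
      then have "Suc u \<le> u" unfolding u_def by (intro Greatest_le_nat[of _ _ N]) auto
      then show False by simp
    qed
    then show ?thesis using uP that by auto
  qed
  define \<delta> where "\<delta> = (if Suc u < N then x (Suc u) - x u else 1)"
  have dp: "\<delta> > 0" unfolding \<delta>_def using above by auto
  have J: "{..u} \<subseteq> {..<N}" using uP by auto
  have eq: "(\<Sum>i\<in>{..u}. y i) = (\<Sum>i\<in>{..u}. x i)"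
  proof (rule block_eq[OF m J dp])
    fix d :: real assume d: "\<bar>d\<bar> \<le> \<delta>"
    show "(\<lambda>i. x i + (if i \<in> {..u} then d else 0)) \<in> mono_cone N"
      unfolding mono_cone_def
    proof (intro CollectI conjI allI impI)
      fix k assume k: "Suc k < N"
      have xk: "x k \<le> x (Suc k)" using xc k unfolding mono_cone_def by auto
      show "x k + (if k \<in> {..u} then d else 0) \<le> x (Suc k) + (if Suc k \<in> {..u} then d else 0)"
      proof (cases "k = u")
        case True
        then show ?thesis using d k unfolding \<delta>_def by auto
      next
        case False then show ?thesis using xk k by auto
      qed
    next
      fix k assume "N \<le> k" then show "x k + (if k \<in> {..u} then d else 0) = 0"
        using xc uP unfolding mono_cone_def by auto
    qed
  qed
  have "(\<Sum>i\<in>{..u}. x i) \<le> (\<Sum>i\<in>{..u}. x t)"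
    by (intro sum_mono) (use uP cone_mono[OF xc] order_trans in \<open>fastforce\<close>)
  then have "(\<Sum>i\<in>{..u}. y i) \<le> real (Suc u) * x t" using eq by simp
  then have "(\<Sum>i\<in>{..u}. y i) / real (Suc u) \<le> x t" by (simp add: field_simps)
  then show ?thesis using tu uP by blast
qed



lemma young: fixes a c :: real assumes "a \<ge> 0" "c > 0" "p \<ge> 1"
  shows "a \<le> (1 - 1/real p) * c + a^p / (real p * c^(p-1))"
proof -
  define r where "r = a / c"
  have r0: "r \<ge> 0" unfolding r_def using assms by auto
  have "1 + real p * (r - 1) \<le> (1 + (r - 1))^p" by (rule Bernoulli_inequality) (use r0 in auto)
  then have b: "1 + real p * (r - 1) \<le> r^p" by simp
  have a: "a = c * r" unfolding r_def using assms by simp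
  have cp: "c^p = c * c^(p-1)" using assms(3) by (metis One_nat_def Suc_pred less_eq_Suc_le power_Suc)
  have "a^p / (real p * c^(p-1)) = c * r^p / real p"
    using assms cp unfolding a by (simp add: power_mult_distrib field_simps)
  moreover have "c * (1 + real p * (r - 1)) \<le> c * r^p" using b assms by (intro mult_left_mono) auto
  then have "c * (1 + real p * (r - 1)) / real p \<le> c * r^p / real p" by (rule divide_right_mono) simp
  moreover have "c * (1 + real p * (r - 1)) / real p = c/real p + c*r - c" using assms by (simp add: field_simps)
  moreover have "(1 - 1/real p) * c = c - c / real p" by (simp add: algebra_simps)
  ultimately show ?thesis unfolding a by linarith
qed

definition Aavg :: "nat \<Rightarrow> (nat \<Rightarrow> real) \<Rightarrow> nat \<Rightarrow> real" where
  "Aavg N y s = (\<Sum>i\<in>{s..<N}. y i) / real (N - s)"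
definition Bavg :: "(nat \<Rightarrow> real) \<Rightarrow> nat \<Rightarrow> real" where
  "Bavg y u = (\<Sum>i\<in>{..u}. y i) / real (Suc u)"

lemma pointwise: assumes t: "t < N" and p: "p \<ge> 1" and c: "c > 0"
  shows "(eta_mono N y t)^2 \<le> (1 - 1/real p) * c +
     ((\<Sum>s\<in>{..t}. Aavg N y s ^ (2*p)) + (\<Sum>u\<in>{t..<N}. Bavg y u ^ (2*p))) / (real p * c^(p-1))"
proof -
  let ?x = "eta_mono N y"
  have m: "ismin N y ?x" by (rule eta_ismin)
  have key: "(?x t ^ 2) ^ p \<le> (\<Sum>s\<in>{..t}. Aavg N y s ^ (2*p)) + (\<Sum>u\<in>{t..<N}. Bavg y u ^ (2*p))"
  proof (cases "?x t \<ge> 0")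
    case True
    obtain s where s: "s \<le> t" "?x t \<le> Aavg N y s" using upper_avg[OF m t] unfolding Aavg_def by blast
    have "(?x t ^ 2) ^ p \<le> (Aavg N y s ^ 2) ^ p" using True s by (intro power_mono) auto
    also have "\<dots> = Aavg N y s ^ (2*p)" by (simp add: power_mult)
    also have "\<dots> \<le> (\<Sum>s\<in>{..t}. Aavg N y s ^ (2*p))" using s
      by (intro member_le_sum) (auto simp: power_mult)
    also have "\<dots> \<le> (\<Sum>s\<in>{..t}. Aavg N y s ^ (2*p)) + (\<Sum>u\<in>{t..<N}. Bavg y u ^ (2*p))"
      by (simp add: sum_nonneg power_mult)
    finally show ?thesis .
  next
    case False
    obtain u where u: "t \<le> u" "u < N" "Bavg y u \<le> ?x t" using lower_avg[OF m t] unfolding Bavg_def by blast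
    have "?x t ^ 2 \<le> Bavg y u ^ 2" unfolding abs_le_square_iff[symmetric] using False u by auto
    then have "(?x t ^ 2) ^ p \<le> (Bavg y u ^ 2) ^ p" by (rule power_mono) auto
    also have "\<dots> = Bavg y u ^ (2*p)" by (simp add: power_mult)
    also have "\<dots> \<le> (\<Sum>u\<in>{t..<N}. Bavg y u ^ (2*p))" using u
      by (intro member_le_sum) (auto simp: power_mult)
    also have "\<dots> \<le> (\<Sum>s\<in>{..t}. Aavg N y s ^ (2*p)) + (\<Sum>u\<in>{t..<N}. Bavg y u ^ (2*p))"
      by (simp add: sum_nonneg power_mult)
    finally show ?thesis .
  qed
  have "?x t ^ 2 \<le> (1 - 1/real p) * c + (?x t ^ 2)^p / (real p * c^(p-1))"
    by (rule young) (use c p in auto)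
  also have "\<dots> \<le> (1 - 1/real p) * c +
     ((\<Sum>s\<in>{..t}. Aavg N y s ^ (2*p)) + (\<Sum>u\<in>{t..<N}. Bavg y u ^ (2*p))) / (real p * c^(p-1))"
    using key c p by (intro add_left_mono divide_right_mono) auto
  finally show ?thesis .
qed


lemma EA: assumes "s < N"
  shows "integrable (gauss N) (\<lambda>z. Aavg N z s ^ (2*p))"
    "(\<integral>z. Aavg N z s ^ (2*p) \<partial>gauss N) = mom p / real (N - s) ^ p"
proof -
  have J: "{s..<N} \<subseteq> {..<N}" "{s..<N} \<noteq> {}" using assms by auto
  have e: "Aavg N z s ^ (2*p) = (\<Sum>i\<in>{s..<N}. z i)^(2*p) / real (N - s) ^ (2*p)" for z
    unfolding Aavg_def by (simp add: power_divide)
  show "integrable (gauss N) (\<lambda>z. Aavg N z s ^ (2*p))"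
    unfolding e using gauss_sum_moment(1)[OF J] by simp
  have "(\<integral>z. Aavg N z s ^ (2*p) \<partial>gauss N) = mom p * real (N - s) ^ p / real (N - s) ^ (2*p)"
    unfolding e using gauss_sum_moment(2)[OF J, of p] by simp
  also have "\<dots> = mom p / real (N - s) ^ p" using assms by (simp add: power_mult power2_eq_square mult_2 power_add)
  finally show "(\<integral>z. Aavg N z s ^ (2*p) \<partial>gauss N) = mom p / real (N - s) ^ p" .
qed

lemma EB: assumes "u < N"
  shows "integrable (gauss N) (\<lambda>z. Bavg z u ^ (2*p))"
    "(\<integral>z. Bavg z u ^ (2*p) \<partial>gauss N) = mom p / real (Suc u) ^ p"
proof -
  have J: "{..u} \<subseteq> {..<N}" "{..u} \<noteq> {}" using assms by auto
  have e: "Bavg z u ^ (2*p) = (\<Sum>i\<in>{..u}. z i)^(2*p) / real (Suc u) ^ (2*p)" for z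
    unfolding Bavg_def by (simp add: power_divide)
  show "integrable (gauss N) (\<lambda>z. Bavg z u ^ (2*p))"
    unfolding e using gauss_sum_moment(1)[OF J] by simp
  have "(\<integral>z. Bavg z u ^ (2*p) \<partial>gauss N) = mom p * real (Suc u) ^ p / real (Suc u) ^ (2*p)"
    unfolding e using gauss_sum_moment(2)[OF J, of p] by simp
  also have "\<dots> = mom p / real (Suc u) ^ p" by (simp add: mult_2 power_add)
  finally show "(\<integral>z. Bavg z u ^ (2*p) \<partial>gauss N) = mom p / real (Suc u) ^ p" .
qed

lemma risk_bound: assumes p: "p \<ge> 1" and c: "\<And>t. c t > 0"
  shows "risk N \<le> (\<Sum>t<N. (1 - 1/real p) * c t +
     ((\<Sum>s\<in>{..t}. mom p / real (N - s) ^ p) + (\<Sum>u\<in>{t..<N}. mom p / real (Suc u) ^ p)) / (real p * c t ^ (p-1)))"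
proof -
  interpret prob_space "gauss N" by (rule gauss_prob)
  define g where "g t z = (1 - 1/real p) * c t +
     ((\<Sum>s\<in>{..t}. Aavg N z s ^ (2*p)) + (\<Sum>u\<in>{t..<N}. Bavg z u ^ (2*p))) / (real p * c t ^ (p-1))" for t z
  have ig: "integrable (gauss N) (g t)" if "t < N" for t
  proof -
    have iA: "integrable (gauss N) (\<lambda>z. \<Sum>s\<in>{..t}. Aavg N z s ^ (2*p))"
      by (rule Bochner_Integration.integrable_sum, rule EA(1)) (use that in auto)
    have iB: "integrable (gauss N) (\<lambda>z. \<Sum>u\<in>{t..<N}. Bavg z u ^ (2*p))"
      by (rule Bochner_Integration.integrable_sum, rule EB(1)) (use that in auto)
    show ?thesis unfolding g_def
      by (intro Bochner_Integration.integrable_add integrable_const integrable_divide_zero iA iB)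
  qed
  have Eg: "(\<integral>z. g t z \<partial>gauss N) = (1 - 1/real p) * c t +
     ((\<Sum>s\<in>{..t}. mom p / real (N - s) ^ p) + (\<Sum>u\<in>{t..<N}. mom p / real (Suc u) ^ p)) / (real p * c t ^ (p-1))"
    if "t < N" for t
  proof -
    have iA: "integrable (gauss N) (\<lambda>z. \<Sum>s\<in>{..t}. Aavg N z s ^ (2*p))"
      by (rule Bochner_Integration.integrable_sum, rule EA(1)) (use that in auto)
    have iB: "integrable (gauss N) (\<lambda>z. \<Sum>u\<in>{t..<N}. Bavg z u ^ (2*p))"
      by (rule Bochner_Integration.integrable_sum, rule EB(1)) (use that in auto)
    have sA: "(\<integral>z. (\<Sum>s\<in>{..t}. Aavg N z s ^ (2*p)) \<partial>gauss N) = (\<Sum>s\<in>{..t}. mom p / real (N - s) ^ p)"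
      by (subst Bochner_Integration.integral_sum) (use that EA in auto)
    have sB: "(\<integral>z. (\<Sum>u\<in>{t..<N}. Bavg z u ^ (2*p)) \<partial>gauss N) = (\<Sum>u\<in>{t..<N}. mom p / real (Suc u) ^ p)"
      by (subst Bochner_Integration.integral_sum) (use that EB in auto)
    show ?thesis unfolding g_def
      using iA iB sA sB
      by (simp add: Bochner_Integration.integral_add Bochner_Integration.integrable_add prob_space)
  qed
  have f_le: "(\<Sum>i<N. (eta_mono N z i)^2) \<le> (\<Sum>t<N. g t z)" for z
    unfolding g_def by (intro sum_mono pointwise p c) auto
  have RHS: "(\<integral>z. (\<Sum>t<N. g t z) \<partial>gauss N) = (\<Sum>t<N. (1 - 1/real p) * c t +
     ((\<Sum>s\<in>{..t}. mom p / real (N - s) ^ p) + (\<Sum>u\<in>{t..<N}. mom p / real (Suc u) ^ p)) / (real p * c t ^ (p-1)))"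
    by (subst Bochner_Integration.integral_sum) (use ig Eg in auto)
  have iG: "integrable (gauss N) (\<lambda>z. \<Sum>t<N. g t z)" using ig by (intro Bochner_Integration.integrable_sum) auto
  show ?thesis
  proof (cases "integrable (gauss N) (\<lambda>z. \<Sum>i<N. (eta_mono N z i)^2)")
    case True
    have "risk N \<le> (\<integral>z. (\<Sum>t<N. g t z) \<partial>gauss N)"
      unfolding risk_def by (rule integral_mono[OF True iG f_le])
    then show ?thesis unfolding RHS .
  next
    case False
    then have "risk N = 0" unfolding risk_def by (rule not_integrable_integral_eq)
    also have "0 \<le> (\<integral>z. (\<Sum>t<N. g t z) \<partial>gauss N)"
      proof (rule Bochner_Integration.integral_nonneg)
      fix z
      have "0 \<le> (\<Sum>i<N. (eta_mono N z i)^2)" by (intro sum_nonneg) auto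
      then show "0 \<le> (\<Sum>t<N. g t z)" using f_le[of z] by linarith
    qed
    finally show ?thesis unfolding RHS .
  qed
qed



lemma mom_Suc: "mom (Suc k) = mom k * (2 * real k + 1)"
proof -
  have a: "fact (2 * Suc k) = (2 * (real k + 1)) * ((2 * real k + 1) * (fact (2*k) :: real))"
    by (simp add: algebra_simps)
  have b: "(2::real)^(Suc k) * fact (Suc k) = (2 * (real k + 1)) * (2^k * fact k)"
    by (simp add: algebra_simps)
  have "mom (Suc k) = ((2 * (real k + 1)) * ((2 * real k + 1) * fact (2*k))) / ((2 * (real k + 1)) * (2^k * fact k))"
    unfolding mom_def a b ..
  also have "\<dots> = ((2 * real k + 1) * fact (2*k)) / (2^k * fact k)"
    by (rule nonzero_mult_divide_mult_cancel_left) simp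
  finally show ?thesis unfolding mom_def by simp
qed

lemma mom_le: "mom k \<le> real k ^ k"
proof (induction k)
  case 0 then show ?case by (simp add: mom_def)
next
  case (Suc k)
  have m0: "mom k \<ge> 0" unfolding mom_def by simp
  have key: "(2 * real k + 1) * real k ^ k \<le> real (Suc k) ^ Suc k"
  proof (cases "k = 0")
    case True then show ?thesis by simp
  next
    case False
    then have kp: "real k > 0" by simp
    have "1 + real k * (1 / real k) \<le> (1 + 1 / real k) ^ k"
      by (rule Bernoulli_inequality) (rule order_trans[of _ 0], simp_all)
    then have "2 \<le> (1 + 1 / real k) ^ k" using kp by simp
    also have "(1 + 1 / real k) ^ k = real (Suc k) ^ k / real k ^ k"
      using kp by (simp add: field_simps power_divide)
    finally have "2 * real k ^ k \<le> real (Suc k) ^ k" using kp by (simp add: field_simps)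
    then have "(real k + 1) * (2 * real k ^ k) \<le> (real k + 1) * real (Suc k) ^ k"
      by (intro mult_left_mono) auto
    moreover have "(real k + 1) * (2 * real k ^ k) = (2 * real k + 2) * real k ^ k"
      by (simp add: algebra_simps)
    ultimately have h2: "(2 * real k + 2) * real k ^ k \<le> (real k + 1) * real (Suc k) ^ k" by simp
    have h1: "(2 * real k + 1) * real k ^ k \<le> (2 * real k + 2) * real k ^ k"
      by (intro mult_right_mono) auto
    have h3: "(real k + 1) * real (Suc k) ^ k = real (Suc k) ^ Suc k" by simp
    show ?thesis using order_trans[OF h1 h2] unfolding h3 .
  qed
  have "mom (Suc k) = mom k * (2 * real k + 1)" by (rule mom_Suc)
  also have "\<dots> \<le> real k ^ k * (2 * real k + 1)" using Suc.IH by (intro mult_right_mono) auto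
  also have "\<dots> \<le> real (Suc k) ^ Suc k" using key by (simp add: mult.commute)
  finally show ?case .
qed

lemma sumA2: "t < N \<Longrightarrow> (\<Sum>s\<in>{..t}. 1 / real (N - s)^2) \<le> 2 / real (N - t) - 1 / real N"
proof (induction t)
  case 0 then show ?case by (simp add: power2_eq_square field_simps)
next
  case (Suc t)
  define m where "m = N - Suc t"
  have m1: "m \<ge> 1" "N - t = m + 1" using Suc.prems unfolding m_def by auto
  have "(\<Sum>s\<in>{..Suc t}. 1 / real (N - s)^2) = (\<Sum>s\<in>{..t}. 1 / real (N - s)^2) + 1 / real m ^ 2"
    by (simp add: m_def)
  also have "\<dots> \<le> 2 / real (m + 1) - 1 / real N + 1 / real m ^ 2" using Suc m1 by simp
  also have "\<dots> \<le> 2 / real m - 1 / real N"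
  proof -
    have mp: "real m > 0" using m1 by simp
    have e: "2 / real m - 2 / real (m + 1) = 2 / (real m * (real m + 1))" using mp by (simp add: field_simps)
    have "real m * (real m + 1) \<le> 2 * (real m * real m)" using m1 by (simp add: algebra_simps)
    then have "1 / real m ^ 2 \<le> 2 / (real m * (real m + 1))" using mp
      by (simp add: divide_simps power2_eq_square)
    then have "1 / real m ^ 2 \<le> 2 / real m - 2 / real (m + 1)" using e by simp
    then show ?thesis by simp
  qed
  finally show ?case by (simp add: m_def)
qed

lemma sumB2: "a \<le> b \<Longrightarrow> (\<Sum>k\<in>{a..<b}. 1 / real (Suc k)^2) \<le> 2 / real (Suc a) - 2 / real (Suc b)"
proof (induction b)
  case 0 then show ?case by simp
next
  case (Suc b)
  show ?case
  proof (cases "a = Suc b")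
    case True then show ?thesis by simp
  next
    case False
    then have ab: "a \<le> b" using Suc.prems by simp
    have "(\<Sum>k\<in>{a..<Suc b}. 1 / real (Suc k)^2) = (\<Sum>k\<in>{a..<b}. 1 / real (Suc k)^2) + 1 / real (Suc b)^2"
      using ab by simp
    also have "\<dots> \<le> 2 / real (Suc a) - 2 / real (Suc b) + 1 / real (Suc b)^2" using Suc.IH ab by simp
    also have "\<dots> \<le> 2 / real (Suc a) - 2 / real (Suc (Suc b))"
    proof -
      define m where "m = real (Suc b)"
      have mp: "m \<ge> 1" unfolding m_def by simp
      have e: "2 / m - 2 / (m + 1) = 2 / (m * (m + 1))" using mp by (simp add: field_simps)
      have "m * (m + 1) \<le> 2 * (m * m)" using mp by (simp add: algebra_simps)
      then have "1 / m ^ 2 \<le> 2 / (m * (m + 1))" using mp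
        by (simp add: divide_simps power2_eq_square)
      then have "1 / m ^ 2 \<le> 2 / m - 2 / (m + 1)" using e by simp
      then have "1 / real (Suc b)^2 \<le> 2 / real (Suc b) - 2 / real (Suc (Suc b))"
        unfolding m_def by (simp add: add.commute)
      then show ?thesis by simp
    qed
    finally show ?thesis .
  qed
qed

lemma T1: assumes "t < N" "p \<ge> 2"
  shows "(\<Sum>s\<in>{..t}. 1 / real (N - s)^p) \<le> 2 / real (N - t)^(p-1)"
proof -
  have "(\<Sum>s\<in>{..t}. 1 / real (N - s)^p) \<le> (\<Sum>s\<in>{..t}. (1 / real (N - t)^(p-2)) * (1 / real (N - s)^2))"
  proof (intro sum_mono)
    fix s assume "s \<in> {..t}"
    then have le: "real (N - t) \<le> real (N - s)" "real (N - t) > 0" using assms by auto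
    have "real (N - t)^(p-2) * real (N - s)^2 \<le> real (N - s)^(p-2) * real (N - s)^2"
      using le by (intro mult_right_mono power_mono) auto
    also have "\<dots> = real (N - s)^p" using assms(2) by (metis le_add_diff_inverse2 power_add)
    finally have "real (N - t)^(p-2) * real (N - s)^2 \<le> real (N - s)^p" .
    then show "1 / real (N - s)^p \<le> (1 / real (N - t)^(p-2)) * (1 / real (N - s)^2)"
      using le by (simp add: divide_simps)
  qed
  also have "\<dots> = (1 / real (N - t)^(p-2)) * (\<Sum>s\<in>{..t}. 1 / real (N - s)^2)"
    by (simp add: sum_distrib_left)
  also have "\<dots> \<le> (1 / real (N - t)^(p-2)) * (2 / real (N - t))"
  proof (intro mult_left_mono)
    show "(\<Sum>s\<in>{..t}. 1 / real (N - s)^2) \<le> 2 / real (N - t)"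
      using sumA2[OF assms(1)] by (rule order_trans) simp
  qed simp
  also have "\<dots> = 2 / real (N - t)^(p-1)"
  proof -
    have pe: "p - 1 = Suc (p - 2)" using assms(2) by simp
    show ?thesis unfolding pe power_Suc2 using assms(1) by simp
  qed
  finally show ?thesis .
qed

lemma T2: assumes "t < N" "p \<ge> 2"
  shows "(\<Sum>u\<in>{t..<N}. 1 / real (Suc u)^p) \<le> 2 / real (Suc t)^(p-1)"
proof -
  have "(\<Sum>u\<in>{t..<N}. 1 / real (Suc u)^p) \<le> (\<Sum>u\<in>{t..<N}. (1 / real (Suc t)^(p-2)) * (1 / real (Suc u)^2))"
  proof (intro sum_mono)
    fix u assume "u \<in> {t..<N}"
    then have le: "real (Suc t) \<le> real (Suc u)" by auto
    have "real (Suc t)^(p-2) * real (Suc u)^2 \<le> real (Suc u)^(p-2) * real (Suc u)^2"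
      using le by (intro mult_right_mono power_mono) auto
    also have "\<dots> = real (Suc u)^p" using assms(2) by (metis le_add_diff_inverse2 power_add)
    finally have "real (Suc t)^(p-2) * real (Suc u)^2 \<le> real (Suc u)^p" .
    then show "1 / real (Suc u)^p \<le> (1 / real (Suc t)^(p-2)) * (1 / real (Suc u)^2)"
      by (simp add: divide_simps)
  qed
  also have "\<dots> = (1 / real (Suc t)^(p-2)) * (\<Sum>u\<in>{t..<N}. 1 / real (Suc u)^2)"
    by (simp add: sum_distrib_left)
  also have "\<dots> \<le> (1 / real (Suc t)^(p-2)) * (2 / real (Suc t))"
  proof (intro mult_left_mono)
    show "(\<Sum>u\<in>{t..<N}. 1 / real (Suc u)^2) \<le> 2 / real (Suc t)"
      using sumB2[of t N] assms(1) by (auto elim: order_trans)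
  qed simp
  also have "\<dots> = 2 / real (Suc t)^(p-1)"
  proof -
    have pe: "p - 1 = Suc (p - 2)" using assms(2) by simp
    show ?thesis unfolding pe power_Suc2 using assms(1) by simp
  qed
  finally show ?thesis .
qed

lemma pow_superadd: fixes a b :: real assumes "a \<ge> 0" "b \<ge> 0" "p \<ge> 1"
  shows "a^p + b^p \<le> (a + b)^p"
proof -
  obtain k where k: "p = Suc k" using assms(3) by (cases p) auto
  have "a^p + b^p = a * a^k + b * b^k" unfolding k by simp
  also have "\<dots> \<le> a * (a+b)^k + b * (a+b)^k"
    using assms by (intro add_mono mult_left_mono power_mono) auto
  also have "\<dots> = (a+b)^p" unfolding k by (simp add: algebra_simps)
  finally show ?thesis .
qed



lemma W2: fixes q :: real assumes q: "0 < q" "q \<le> 1"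
  shows "(\<Sum>K\<in>{1..N}. real K powr (q - 1)) \<le> real N powr q / q"
proof (induction N)
  case 0 then show ?case by simp
next
  case (Suc N)
  have step: "real (Suc N) powr (q - 1) \<le> (real (Suc N) powr q - real N powr q) / q"
  proof (cases "N = 0")
    case True then show ?thesis using q by simp
  next
    case False
    have der: "\<And>x. real N \<le> x \<Longrightarrow> x \<le> real (Suc N) \<Longrightarrow> ((\<lambda>z. z powr q) has_real_derivative q * x powr (q - 1)) (at x)"
      using False by (intro has_real_derivative_powr) auto
    obtain z where z: "real N < z" "z < real (Suc N)"
      "real (Suc N) powr q - real N powr q = (real (Suc N) - real N) * (q * z powr (q - 1))"
      using MVT2[of "real N" "real (Suc N)" "\<lambda>z. z powr q" "\<lambda>x. q * x powr (q - 1)", OF _ der] by auto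
    have "real (Suc N) powr (q - 1) \<le> z powr (q - 1)"
      using z q False by (intro powr_mono2') auto
    then have "q * real (Suc N) powr (q - 1) \<le> real (Suc N) powr q - real N powr q"
      using z q by simp
    then show ?thesis using q by (simp add: field_simps)
  qed
  have "(\<Sum>K\<in>{1..Suc N}. real K powr (q - 1)) = (\<Sum>K\<in>{1..N}. real K powr (q - 1)) + real (Suc N) powr (q - 1)"
    by simp
  also have "\<dots> \<le> real N powr q / q + (real (Suc N) powr q - real N powr q) / q"
    using Suc.IH step by (rule add_mono)
  also have "\<dots> = real (Suc N) powr q / q" by (simp add: add_divide_distrib[symmetric])
  finally show ?case .
qed

lemma D1: "(\<Sum>t<N. \<Sum>s\<in>{..t}. f s) = (\<Sum>s<N. real (N - s) * f s :: real)"
proof (induction N)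
  case 0 then show ?case by simp
next
  case (Suc N)
  have "(\<Sum>s<Suc N. real (Suc N - s) * f s) = (\<Sum>s<Suc N. real (N - s) * f s + f s)"
    by (intro sum.cong) (auto simp: Suc_diff_le algebra_simps)
  also have "\<dots> = (\<Sum>s<N. real (N - s) * f s) + (\<Sum>s<Suc N. f s)"
    by (simp add: sum.distrib)
  moreover have "(\<Sum>t<Suc N. \<Sum>s\<in>{..t}. f s) = (\<Sum>t<N. \<Sum>s\<in>{..t}. f s) + (\<Sum>s\<in>{..N}. f s)"
    by (rule sum.lessThan_Suc)
  moreover have "(\<Sum>s<Suc N. f s) = (\<Sum>s\<in>{..N}. f s)" by (simp add: lessThan_Suc_atMost)
  ultimately show ?case using Suc.IH by simp
qed

lemma D2: "(\<Sum>t<N. \<Sum>u\<in>{t..<N}. g u) = (\<Sum>u<N. real (Suc u) * g u :: real)"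
proof (induction N)
  case 0 then show ?case by simp
next
  case (Suc N)
  have "(\<Sum>t<Suc N. \<Sum>u\<in>{t..<Suc N}. g u) = (\<Sum>t<N. (\<Sum>u\<in>{t..<N}. g u) + g N) + g N"
    by (simp add: sum.atLeastLessThan_Suc)
  also have "\<dots> = (\<Sum>t<N. \<Sum>u\<in>{t..<N}. g u) + real (Suc N) * g N"
    by (simp add: sum.distrib algebra_simps)
  finally show ?case using Suc.IH by simp
qed

lemma risk_le_2N: "risk N \<le> 2 * real N"
proof -
  have "risk N \<le> (\<Sum>t<N. (1 - 1/real (1::nat)) * 1 +
     ((\<Sum>s\<in>{..t}. mom 1 / real (N - s) ^ 1) + (\<Sum>u\<in>{t..<N}. mom 1 / real (Suc u) ^ 1)) / (real (1::nat) * 1 ^ (1-1)))"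
    by (rule risk_bound) auto
  also have "\<dots> = (\<Sum>t<N. \<Sum>s\<in>{..t}. 1 / real (N - s)) + (\<Sum>t<N. \<Sum>u\<in>{t..<N}. 1 / real (Suc u))"
    by (simp add: mom_def sum.distrib)
  also have "\<dots> = real N + real N"
    unfolding D1 D2 by simp
  finally show ?thesis by simp
qed



lemma tangent_bound: fixes c X :: real assumes "c > 0" "0 \<le> X" "X \<le> c^p" "p \<ge> 1"
  shows "(1 - 1/real p) * c + X / (real p * c^(p-1)) \<le> c"
proof -
  have cp: "c^p = c * c^(p-1)" using assms(4) by (metis One_nat_def Suc_pred less_eq_Suc_le power_Suc)
  have "X / (real p * c^(p-1)) \<le> c^p / (real p * c^(p-1))"
    using assms by (intro divide_right_mono) auto
  also have "\<dots> = c / real p" unfolding cp using assms by simp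
  finally have "X / (real p * c^(p-1)) \<le> c / real p" .
  moreover have "(1 - 1/real p) * c + c / real p = c" by (simp add: algebra_simps)
  ultimately show ?thesis by linarith
qed

lemma wpow: assumes "K \<ge> 1" "p \<ge> 1"
  shows "(real K powr (1/real p - 1))^p = 1 / real K^(p-1)"
proof -
  have K0: "real K > 0" using assms by simp
  have "(real K powr (1/real p - 1))^p = real K powr (real p * (1/real p - 1))"
    using K0 by (simp add: powr_power)
  also have "real p * (1/real p - 1) = - real (p - 1)" using assms by (simp add: field_simps of_nat_diff)
  also have "real K powr (- real (p - 1)) = 1 / real K^(p-1)"
    using K0 by (simp add: powr_minus powr_realpow divide_inverse)
  finally show ?thesis .
qed

lemma two_pow: assumes "p \<ge> 1" shows "((2::real) powr (1/real p))^p = 2"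
proof -
  have "((2::real) powr (1/real p))^p = 2 powr (real p * (1/real p))" by (simp add: powr_power)
  also have "\<dots> = 2" using assms by simp
  finally show ?thesis .
qed

lemma risk_log: assumes N: "N \<ge> 10" shows "risk N \<le> 20 * (ln (real N))^2"
proof -
  define L where "L = ln (real N)"
  have e2: "exp (2::real) \<le> 9"
  proof -
    have "exp (2::real) = exp 1 * exp 1" by (simp flip: exp_add)
    also have "\<dots> \<le> 3 * 3" using exp_le by (intro mult_mono) auto
    finally show ?thesis by simp
  qed
  have L2: "2 \<le> L" unfolding L_def using N e2 by (subst ln_ge_iff) auto
  define p where "p = nat \<lfloor>L\<rfloor>"
  have p2: "p \<ge> 2" unfolding p_def using L2 by linarith
  have pL: "real p \<le> L" "L < real p + 1" unfolding p_def using L2 by linarith+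
  define q where "q = 1 / real p"
  have q0: "0 < q" "q \<le> 1/2" "q \<le> 1" unfolding q_def using p2 by auto
  define w where "w K = real K powr (q - 1)" for K :: nat
  have w0: "w K \<ge> 0" for K unfolding w_def by simp
  have wpos: "w K > 0" if "K \<ge> 1" for K unfolding w_def using that by simp
  have wp: "w K ^ p = 1 / real K^(p-1)" if "K \<ge> 1" for K
    unfolding w_def q_def using wpow[OF that] p2 by simp
  define c where "c t = real p * 2 powr q * (w (N - t) + w (Suc t))" for t
  have cpos: "c t > 0" for t unfolding c_def using p2 w0[of "N - t"] wpos[of "Suc t"] by (intro mult_pos_pos add_nonneg_pos) auto
  have trm: "(1 - 1/real p) * c t +
     ((\<Sum>s\<in>{..t}. mom p / real (N - s) ^ p) + (\<Sum>u\<in>{t..<N}. mom p / real (Suc u) ^ p)) / (real p * c t ^ (p-1)) \<le> c t"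
    if t: "t < N" for t
  proof (rule tangent_bound[OF cpos])
    show "p \<ge> 1" using p2 by simp
    show "0 \<le> (\<Sum>s\<in>{..t}. mom p / real (N - s) ^ p) + (\<Sum>u\<in>{t..<N}. mom p / real (Suc u) ^ p)"
      by (intro add_nonneg_nonneg sum_nonneg) (auto simp: mom_def)
    have m0: "0 \<le> mom p" by (simp add: mom_def)
    have "(\<Sum>s\<in>{..t}. mom p / real (N - s) ^ p) + (\<Sum>u\<in>{t..<N}. mom p / real (Suc u) ^ p)
       = mom p * ((\<Sum>s\<in>{..t}. 1 / real (N - s) ^ p) + (\<Sum>u\<in>{t..<N}. 1 / real (Suc u) ^ p))"
      by (simp add: sum_distrib_left algebra_simps)
    also have "\<dots> \<le> real p ^ p * (2 / real (N - t)^(p-1) + 2 / real (Suc t)^(p-1))"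
      using T1[OF t p2] T2[OF t p2] m0 mom_le[of p]
      by (intro mult_mono add_mono) (auto intro!: add_nonneg_nonneg sum_nonneg)
    also have "\<dots> = (real p * 2 powr q)^p * (w (N - t) ^ p + w (Suc t) ^ p)"
      using t wp[of "N - t"] wp[of "Suc t"] two_pow[of p] p2
      by (simp add: power_mult_distrib q_def algebra_simps add_divide_distrib)
    also have "\<dots> \<le> (real p * 2 powr q)^p * (w (N - t) + w (Suc t)) ^ p"
      using w0 p2 by (intro mult_left_mono pow_superadd) auto
    also have "\<dots> = c t ^ p" unfolding c_def by (simp add: power_mult_distrib)
    finally show "(\<Sum>s\<in>{..t}. mom p / real (N - s) ^ p) + (\<Sum>u\<in>{t..<N}. mom p / real (Suc u) ^ p) \<le> c t ^ p" .
  qed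
  have "risk N \<le> (\<Sum>t<N. (1 - 1/real p) * c t +
     ((\<Sum>s\<in>{..t}. mom p / real (N - s) ^ p) + (\<Sum>u\<in>{t..<N}. mom p / real (Suc u) ^ p)) / (real p * c t ^ (p-1)))"
    by (rule risk_bound) (use p2 cpos in auto)
  also have "\<dots> \<le> (\<Sum>t<N. c t)" by (intro sum_mono trm) auto
  also have "\<dots> = real p * 2 powr q * ((\<Sum>t<N. w (N - t)) + (\<Sum>t<N. w (Suc t)))"
    unfolding c_def by (simp only: sum_distrib_left[symmetric] sum.distrib)
  also have "(\<Sum>t<N. w (N - t)) = (\<Sum>t<N. w (Suc t))"
  proof -
    have "(\<Sum>t<N. w (Suc (N - Suc t))) = (\<Sum>t<N. w (Suc t))" by (rule sum.nat_diff_reindex)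
    moreover have "(\<Sum>t<N. w (Suc (N - Suc t))) = (\<Sum>t<N. w (N - t))"
      by (intro sum.cong) (auto simp: Suc_diff_Suc)
    ultimately show ?thesis by simp
  qed
  also have "(\<Sum>t<N. w (Suc t)) = (\<Sum>K\<in>{1..N}. real K powr (q - 1))"
    unfolding w_def by (simp add: sum.atLeast1_atMost_eq)
  also have "\<dots> \<le> real N powr q / q" by (rule W2) (use q0 in auto)
  finally have R: "risk N \<le> real p * 2 powr q * (2 * (real N powr q / q))" 
    using p2 by (simp add: mult_left_mono)
  have R2: "real p * 2 powr q * (2 * (real N powr q / q)) = 2 * real p ^ 2 * (2 powr q * real N powr q)"
    unfolding q_def using p2 by (simp add: power2_eq_square field_simps)
  have b1: "2 powr q \<le> 3/2"
  proof -
    have "(2::real) powr q \<le> 2 powr (1/2)" using q0 by (intro powr_mono) auto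
    also have "\<dots> = sqrt 2" by (simp add: powr_half_sqrt)
    also have "\<dots> \<le> sqrt (9/4)" by simp
    also have "sqrt (9/4) = (3/2::real)" by (simp add: real_sqrt_divide)
    finally show ?thesis .
  qed
  have b2: "real N powr q \<le> 21/4"
  proof -
    have "real N powr q = exp (q * L)" unfolding L_def using N by (simp add: powr_def)
    also have "q * L \<le> 3/2"
    proof -
      have "q * L = L / real p" unfolding q_def by simp
      also have "\<dots> \<le> (real p + 1) / real p" using pL p2 by (intro divide_right_mono) auto
      also have "\<dots> = 1 + 1 / real p" using p2 by (simp add: field_simps)
      also have "\<dots> \<le> 3/2" using p2 by simp
      finally show ?thesis .
    qed
    then have "exp (q * L) \<le> exp (3/2)" by simp
    also have "exp (3/2::real) = exp 1 * exp (1/2)" by (simp flip: exp_add)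
    also have "exp (1/2::real) = sqrt (exp 1)"
    proof -
      have "(exp (1/2::real))^2 = exp 1" by (simp add: power2_eq_square flip: exp_add)
      then show ?thesis by (intro real_sqrt_unique[symmetric]) auto
    qed
    also have "exp 1 * sqrt (exp 1) \<le> 3 * sqrt 3" using exp_le by (intro mult_mono) auto
    also have "\<dots> \<le> 3 * (7/4)"
    proof -
      have "sqrt 3 \<le> sqrt ((7/4)^2::real)" by (intro real_sqrt_le_mono) (simp add: power2_eq_square)
      then show ?thesis by simp
    qed
    finally show ?thesis by simp
  qed
  have "2 powr q * real N powr q \<le> 3/2 * (21/4)" using b1 b2 by (intro mult_mono) auto
  then have "2 * real p ^ 2 * (2 powr q * real N powr q) \<le> 2 * real p ^ 2 * (3/2 * (21/4))"
    by (intro mult_left_mono) auto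
  then have "risk N \<le> 2 * real p ^ 2 * (3/2 * (21/4))" using R unfolding R2 by (rule_tac order_trans) auto
  also have "\<dots> \<le> 20 * L^2"
  proof -
    have "real p ^ 2 \<le> L^2" using pL by (intro power_mono) auto
    moreover have "0 \<le> L^2" by simp
    ultimately show ?thesis by linarith
  qed
  finally show ?thesis unfolding L_def .
qed



lemma risk1: "risk 1 = 1"
proof -
  have e: "eta_mono 1 z = (\<lambda>i. if i = 0 then z 0 else 0)" for z
  proof (rule ismin_unique[OF eta_ismin])
    show "ismin 1 z (\<lambda>i. if i = 0 then z 0 else 0)"
      unfolding ismin_def mono_cone_def
      by (auto simp: sqdist_def)
  qed
  have "risk 1 = (\<integral>z. (\<Sum>i\<in>{0}. z i)^(2*1) \<partial>gauss 1)"
    unfolding risk_def e by (simp add: lessThan_Suc)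
  also have "\<dots> = mom 1 * real (card {0::nat}) ^ 1"
    by (rule gauss_sum_moment(2)) auto
  also have "\<dots> = 1" by (simp add: mom_def)
  finally show ?thesis .
qed

theorem mainTheorem10:
  shows "risk 1 = 1 \<and> (\<forall>N::nat. N \<ge> 10 \<longrightarrow> risk N \<le> 20 * (ln (real N))^2)
    \<and> (\<forall>N::nat. N \<ge> 1 \<longrightarrow> risk N < 2 * real N * (ln (real N) + 1))"
proof (intro conjI allI impI)
  show "risk 1 = 1" by (rule risk1)
  fix N :: nat
  assume "N \<ge> 10" then show "risk N \<le> 20 * (ln (real N))^2" by (rule risk_log)
next
  fix N :: nat
  assume N: "N \<ge> 1"
  show "risk N < 2 * real N * (ln (real N) + 1)"
  proof (cases "N = 1")
    case True then show ?thesis using risk1 by simp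
  next
    case False
    then have "N \<ge> 2" using N by simp
    then have l: "ln (real N) > 0" by simp
    have "risk N \<le> 2 * real N" by (rule risk_le_2N)
    also have "\<dots> < 2 * real N * (ln (real N) + 1)" using l N by simp
    finally show ?thesis .
  qed
qed


end
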